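(* Let $T>0$ and let $\lambda:[0,T]\times\mathbb{R}\to\mathbb{R}$ be a continuous function such that (i) $y\mapsto\sup_{t\in[0,T]}|\lambda(t,y)|$ belongs to $L^1(\mathbb{R})$, and (ii) the partial derivative $\lambda_t$ exists, is continuous, and $y\mapsto\sup_{t\in[0,T]}|\lambda_t(t,y)|$ belongs to $L^1(\mathbb{R})$. Then the function $$\phi(t,y)\triangleq\int_0^y\exp\Big(2\int_0^s\lambda(t,r)\,dr\Big)ds,\qquad(t,y)\in[0,T]\times\mathbb{R},$$ satisfies $\phi_{yy}(t,y)-2\lambda(t,y)\phi_y(t,y)=0$, and has the following properties: 1. For every $t\in[0,T]$, $\phi(t,\cdot)$ is a one-to-one function from $\mathbb{R}$ onto $\mathbb{R}$, both $\phi(t,\cdot)$ and its inverse $\phi^{-1}(t,\cdot)$ are smooth, and they are globally Lipschitz in $y$: there is a constant $L$ such that $|\phi(t,y)-\phi(t,\bar y)|\le L|y-\bar y|$ and $|\phi^{-1}(t,y)-\phi^{-1}(t,\bar y)|\le L|y-\bar y|$ for all $t\in[0,T]$, $y,\bar y\in\mathbb{R}$. 2. $\phi_y$ is a positive bounded function, and $\phi_t$ is continuous in $t$ and Lipschitz continuous in $y$.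
   Context: Subscripts denote partial derivatives: $\phi_t,\phi_y,\phi_{yy}$, $\lambda_t$. *)

theory Defs
  imports "HOL-Analysis.Analysis"
begin

definition oint :: "real \<Rightarrow> real \<Rightarrow> (real \<Rightarrow> real) \<Rightarrow> real" where
  "oint a b f = (if a \<le> b then integral {a..b} f else - integral {b..a} f)"

definition phi :: "(real \<Rightarrow> real \<Rightarrow> real) \<Rightarrow> real \<Rightarrow> real \<Rightarrow> real" where
  "phi lam t y = oint 0 y (\<lambda>s. exp (2 * oint 0 s (\<lambda>r. lam t r)))"

definition C2 :: "(real \<Rightarrow> real) \<Rightarrow> bool" where
  "C2 f \<longleftrightarrow> (\<forall>y. f differentiable at y) \<and> (\<forall>y. deriv f differentiable at y)
            \<and> continuous_on UNIV (deriv (deriv f))"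

end

theory Submission
  imports Defs
begin

lemma oint_add:
  assumes "\<And>a b. f integrable_on {a..b}"
  shows "oint a b f + oint b c f = oint a c f"
proof -
  have c: "integral {x..y} f + integral {y..z} f = integral {x..z} f" if "x \<le> y" "y \<le> z" for x y z
    by (rule Henstock_Kurzweil_Integration.integral_combine[OF that assms])
  show ?thesis unfolding oint_def
    using c[of a b c] c[of a c b] c[of b a c] c[of b c a] c[of c a b] c[of c b a]
    by (auto split: if_splits)
qed

lemma oint_deriv:
  assumes "continuous_on UNIV f"
  shows "((\<lambda>y. oint 0 y f) has_real_derivative f y) (at y)"
proof -
  define a where "a = y - 1"
  define b where "b = y + 1"
  have int: "\<And>a b. f integrable_on {a..b}"
    using assms by (intro integrable_continuous_interval) (auto intro: continuous_on_subset)
  have "((\<lambda>x. integral {a..x} f) has_real_derivative f y) (at y within {a..b})"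
    by (rule integral_has_real_derivative) (auto simp: a_def b_def intro: continuous_on_subset[OF assms])
  then have "((\<lambda>x. integral {a..x} f) has_real_derivative f y) (at y)"
    using at_within_Icc_at[of a y b] by (simp add: a_def b_def)
  then have d: "((\<lambda>x. oint 0 a f + integral {a..x} f) has_real_derivative f y) (at y)"
    using DERIV_add[OF DERIV_const] by fastforce
  show ?thesis
  proof (rule has_field_derivative_transform_within_open[OF d, of "{a<..<b}"])
    fix x assume "x \<in> {a<..<b}"
    then have "oint a x f = integral {a..x} f" by (simp add: oint_def)
    then show "oint 0 a f + integral {a..x} f = oint 0 x f"
      using oint_add[OF int, of 0 a x] by simp
  qed (auto simp: a_def b_def)
qed

lemma oint_bound:
  assumes "continuous_on UNIV f" "\<And>x. \<bar>f x\<bar> \<le> B"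
  shows "\<bar>oint a b f\<bar> \<le> B * \<bar>b - a\<bar>"
proof -
  have int: "\<And>a b. f integrable_on {a..b}"
    using assms by (intro integrable_continuous_interval) (auto intro: continuous_on_subset)
  have "\<And>x y. x \<le> y \<Longrightarrow> \<bar>integral {x..y} f\<bar> \<le> B * (y - x)"
  proof -
    fix x y :: real assume "x \<le> y"
    have "norm (integral {x..y} f) \<le> integral {x..y} (\<lambda>_. B)"
      by (rule integral_norm_bound_integral) (use int assms in auto)
    then show "\<bar>integral {x..y} f\<bar> \<le> B * (y - x)" using \<open>x \<le> y\<close> by (simp add: mult.commute)
  qed
  note h = this
  show ?thesis using h[of a b] h[of b a] unfolding oint_def by (auto simp: abs_minus_commute)
qed

lemma oint_lower:
  assumes "continuous_on UNIV f" "\<And>x. m \<le> f x" "a \<le> b"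
  shows "m * (b - a) \<le> oint a b f"
proof -
  have int: "\<And>a b. f integrable_on {a..b}"
    using assms by (intro integrable_continuous_interval) (auto intro: continuous_on_subset)
  have "integral {a..b} (\<lambda>_. m) \<le> integral {a..b} f"
    by (rule integral_le) (use int assms in auto)
  then show ?thesis using assms(3) by (simp add: oint_def mult.commute)
qed

lemma oint_L1_bound:
  assumes "continuous_on UNIV f" "integrable lborel M" "\<And>x. \<bar>f x\<bar> \<le> M x"
  shows "\<bar>oint a b f\<bar> \<le> integral UNIV M"
proof -
  have int: "\<And>a b. f integrable_on {a..b}"
    using assms by (intro integrable_continuous_interval) (auto intro: continuous_on_subset)
  have MU: "M integrable_on UNIV" using integrable_on_lborel[OF assms(2)] .
  have Mi: "\<And>a b. M integrable_on {a..b}" by (rule integrable_on_subinterval[OF MU]) auto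
  have M0: "\<And>x. 0 \<le> M x" using assms(3) by (meson abs_ge_zero order_trans)
  have "\<And>x y. \<bar>integral {x..y} f\<bar> \<le> integral UNIV M"
  proof -
    fix x y :: real
    have "norm (integral {x..y} f) \<le> integral {x..y} M"
      by (rule integral_norm_bound_integral) (use int Mi assms in auto)
    also have "\<dots> \<le> integral UNIV M"
      by (rule integral_subset_le) (use Mi MU M0 in auto)
    finally show "\<bar>integral {x..y} f\<bar> \<le> integral UNIV M" by simp
  qed
  note h = this
  show ?thesis using h[of a b] h[of b a] unfolding oint_def by auto
qed

lemma oint_subst:
  assumes "continuous_on UNIV f"
  shows "oint 0 s f = integral {0..1} (\<lambda>u. s * f (s * u))"
proof -
  have "((\<lambda>u. s * f (s * u)) has_integral (oint 0 (s*1) f - oint 0 (s*0) f)) {0..1}"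
  proof (rule fundamental_theorem_of_calculus)
    fix x :: real
    have "((\<lambda>u. oint 0 (s*u) f) has_real_derivative f (s * x) * s) (at x)"
      using DERIV_chain2[OF oint_deriv[OF assms], of "\<lambda>u. s*u" s x]
      by (metis DERIV_cmult_Id)
    then show "((\<lambda>u. oint 0 (s*u) f) has_vector_derivative s * f (s * x)) (at x within {0..1})"
      by (simp add: has_real_derivative_iff_has_vector_derivative[symmetric] mult.commute has_field_derivative_at_within)
  qed simp
  moreover have "oint 0 0 f = 0" by (simp add: oint_def)
  ultimately have h: "((\<lambda>u. s * f (s * u)) has_integral (oint 0 s f)) {0..1}" by simp
  show ?thesis by (rule integral_unique[OF h, symmetric])
qed

lemma oint_joint_cont:
  fixes g :: "'a::topological_space \<Rightarrow> real \<Rightarrow> real"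
  assumes cg: "continuous_on (U \<times> UNIV) (\<lambda>(t,y). g t y)"
  shows "continuous_on (U \<times> UNIV) (\<lambda>(t,s). oint 0 s (g t))"
proof -
  have ct: "continuous_on UNIV (g t)" if "t \<in> U" for t
  proof -
    have "continuous_on UNIV (\<lambda>y. (\<lambda>(t,y). g t y) (t, y))"
      by (rule continuous_on_compose2[OF cg]) (use that in \<open>auto intro!: continuous_intros\<close>)
    then show ?thesis by simp
  qed
  have c1: "continuous_on ((U \<times> UNIV) \<times> cbox 0 1) (\<lambda>x. (\<lambda>(t,y). g t y) ((\<lambda>(p,u). (fst p, snd p * (u::real))) x))"
    by (rule continuous_on_compose2[OF cg]) (auto intro!: continuous_intros simp: split_beta)
  have c2: "continuous_on ((U \<times> UNIV) \<times> cbox 0 1) (\<lambda>(p, u). snd p * g (fst p) (snd p * (u::real)))"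
  proof -
    have c1': "continuous_on ((U \<times> UNIV) \<times> cbox 0 1) (\<lambda>x. g (fst (fst x)) (snd (fst x) * snd (x::(_ \<times> real) \<times> real)))"
      using c1 by (simp add: split_beta)
    show ?thesis unfolding case_prod_beta' by (intro continuous_intros c1')
  qed
  have "continuous_on (U \<times> UNIV) (\<lambda>p. integral (cbox 0 1) (\<lambda>u. snd p * g (fst p) (snd p * (u::real))))"
    using integral_continuous_on_param[OF c2] by simp
  then show ?thesis
    by (rule continuous_on_cong[THEN iffD1, rotated 2]) (auto simp: oint_subst[OF ct])
qed


lemma C2_of:
  fixes f E D :: "real \<Rightarrow> real"
  assumes df: "\<And>y. (f has_real_derivative E y) (at y)"
    and dE: "\<And>y. (E has_real_derivative D y) (at y)"
    and cD: "continuous_on UNIV D"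
  shows "C2 f" "deriv f = E" "deriv E = D"
proof -
  show e1: "deriv f = E" using df DERIV_imp_deriv by blast
  show e2: "deriv E = D" using dE DERIV_imp_deriv by blast
  show "C2 f" unfolding C2_def e1 e2
    using df dE cD real_differentiable_def by blast
qed

lemma inv_part:
  fixes f E l :: "real \<Rightarrow> real"
  assumes df: "\<And>y. (f has_real_derivative E y) (at y)"
    and dE: "\<And>y. (E has_real_derivative E y * (2 * l y)) (at y)"
    and cl: "continuous_on UNIV l"
    and mpos: "m > 0" and Epos: "\<And>y. E y > 0"
    and f0: "f 0 = 0"
    and low: "\<And>a b. a \<le> b \<Longrightarrow> m * (b - a) \<le> f b - f a"
  shows "bij f" "C2 (inv f)" "\<And>z w. \<bar>inv f z - inv f w\<bar> \<le> (1/m) * \<bar>z - w\<bar>"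
proof -
  have cf: "continuous_on S f" for S
    using df by (meson DERIV_isCont continuous_at_imp_continuous_on)
  have cE: "continuous_on UNIV E"
    using dE by (meson DERIV_isCont continuous_at_imp_continuous_on)
  have low2: "m * \<bar>a - b\<bar> \<le> \<bar>f a - f b\<bar>" for a b
    using low[of a b] low[of b a] mpos by (cases "a \<le> b") (auto simp: abs_if algebra_simps)
  have injf: "inj f"
  proof (rule injI)
    fix a b assume "f a = f b"
    then have "m * \<bar>a - b\<bar> \<le> 0" using low2[of a b] by simp
    then have "\<bar>a - b\<bar> \<le> 0" using mpos by (simp add: mult_le_0_iff)
    then show "a = b" by simp
  qed
  have surjf: "surj f"
  proof -
    have "\<exists>x. z = f x" for z
    proof (cases "z \<ge> 0")
      case True
      have "m * (z/m - 0) \<le> f (z/m) - f 0" using low[of 0 "z/m"] True mpos by simp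
      then have "z \<le> f (z/m)" using mpos f0 by simp
      then obtain x where "f x = z" using IVT'[of f 0 z "z/m"] True mpos f0 cf by auto
      then show ?thesis by metis
    next
      case False
      have "m * (0 - z/m) \<le> f 0 - f (z/m)" using low[of "z/m" 0] False mpos
        by (simp add: divide_nonpos_pos)
      then have "f (z/m) \<le> z" using mpos f0 by simp
      then obtain x where "f x = z" using IVT'[of f "z/m" z 0] False mpos f0 cf
        by (auto simp: divide_nonpos_pos)
      then show ?thesis by metis
    qed
    then show ?thesis by (simp add: surj_def)
  qed
  show "bij f" using injf surjf by (simp add: bij_def)
  define g where "g = inv f"
  have fg: "f (g z) = z" for z unfolding g_def using surjf by (simp add: surj_f_inv_f)
  show lip: "\<bar>inv f z - inv f w\<bar> \<le> (1/m) * \<bar>z - w\<bar>" for z w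
    using low2[of "g z" "g w"] mpos unfolding fg g_def[symmetric]
    by (simp add: field_simps)
  have cg: "continuous_on UNIV g"
  proof (rule lipschitz_on_continuous_on)
    show "(1/m)-lipschitz_on UNIV g"
      by (rule lipschitz_onI) (use lip mpos in \<open>auto simp: dist_real_def g_def\<close>)
  qed
  have dg: "(g has_real_derivative inverse (E (g z))) (at z)" for z
    by (rule DERIV_inverse_function[of f "E (g z)" g z "z - 1" "z + 1"])
       (use df Epos fg cg in \<open>auto simp: continuous_on_eq_continuous_at less_imp_neq[symmetric]\<close>)
  define D where "D z = - (E (g z) * (2 * l (g z)) * inverse (E (g z)) * (inverse (E (g z)) * inverse (E (g z))))" for z
  have dD: "((\<lambda>z. inverse (E (g z))) has_real_derivative D z) (at z)" for z
  proof -
    have "((\<lambda>z. E (g z)) has_real_derivative E (g z) * (2 * l (g z)) * inverse (E (g z))) (at z)"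
      by (rule DERIV_chain2[OF dE[of "g z"] dg[of z]])
    from DERIV_inverse_fun[OF this] show ?thesis
      unfolding D_def using Epos[of "g z"] by simp
  qed
  have cEg: "continuous_on UNIV (\<lambda>z. E (g z))" by (rule continuous_on_compose2[OF cE cg]) auto
  have clg: "continuous_on UNIV (\<lambda>z. l (g z))" by (rule continuous_on_compose2[OF cl cg]) auto
  have cD: "continuous_on UNIV D" unfolding D_def
    by (intro continuous_intros cEg clg) (use Epos in \<open>auto simp: less_imp_neq[symmetric]\<close>)
  show "C2 (inv f)" unfolding g_def[symmetric] by (rule C2_of(1)[OF dg dD cD])
qed


lemma slice1:
  fixes g :: "'a::topological_space \<Rightarrow> 'b::topological_space \<Rightarrow> 'c::topological_space"
  assumes cg: "continuous_on (U \<times> UNIV) (\<lambda>(t,y). g t y)" and "t \<in> U"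
  shows "continuous_on UNIV (g t)"
proof -
  have "continuous_on UNIV (\<lambda>y. (\<lambda>(t,y). g t y) (t, y))"
    by (rule continuous_on_compose2[OF cg]) (use assms in \<open>auto intro!: continuous_intros\<close>)
  then show ?thesis by simp
qed

lemma slice2:
  fixes g :: "'a::topological_space \<Rightarrow> 'b::topological_space \<Rightarrow> 'c::topological_space"
  assumes cg: "continuous_on (U \<times> UNIV) (\<lambda>(t,y). g t y)"
  shows "continuous_on U (\<lambda>t. g t y)"
proof -
  have "continuous_on U (\<lambda>t. (\<lambda>(t,y). g t y) (t, y))"
    by (rule continuous_on_compose2[OF cg]) (auto intro!: continuous_intros)
  then show ?thesis by simp
qed

lemma le_SUP_abs:
  fixes g :: "real \<Rightarrow> real \<Rightarrow> real"
  assumes cg: "continuous_on (U \<times> UNIV) (\<lambda>(t,y). g t y)" and "compact U" and "t \<in> U"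
  shows "\<bar>g t y\<bar> \<le> (SUP t\<in>U. \<bar>g t y\<bar>)"
proof -
  have "continuous_on U (\<lambda>t. \<bar>g t y\<bar>)" using slice2[OF cg] by (intro continuous_intros)
  then have "compact ((\<lambda>t. \<bar>g t y\<bar>) ` U)" using assms(2) by (rule compact_continuous_image)
  then have "bdd_above ((\<lambda>t. \<bar>g t y\<bar>) ` U)" by (intro bounded_imp_bdd_above compact_imp_bounded)
  then show ?thesis by (rule cSUP_upper[OF assms(3)])
qed

lemma oint_leibniz:
  fixes f fx :: "real \<Rightarrow> real \<Rightarrow> real"
  assumes d: "\<And>t r. t \<in> U \<Longrightarrow> ((\<lambda>t. f t r) has_real_derivative fx t r) (at t within U)"
    and cf: "continuous_on (U \<times> UNIV) (\<lambda>(t,r). f t r)"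
    and cfx: "continuous_on (U \<times> UNIV) (\<lambda>(t,r). fx t r)"
    and t: "t \<in> U" and U: "convex U"
  shows "((\<lambda>t. oint 0 s (f t)) has_real_derivative oint 0 s (fx t)) (at t within U)"
proof -
  have L: "((\<lambda>t. integral (cbox a b) (f t)) has_real_derivative integral (cbox a b) (fx t)) (at t within U)" for a b
  proof (rule leibniz_rule_field_derivative[OF d _ _ t U])
    show "f x integrable_on cbox a b" if "x \<in> U" for x
      using slice1[OF cf that] by (intro integrable_continuous) (auto intro: continuous_on_subset)
    show "continuous_on (U \<times> cbox a b) (\<lambda>(x, t). fx x t)"
      by (rule continuous_on_subset[OF cfx]) auto
  qed auto
  show ?thesis
  proof (cases "0 \<le> s")
    case True
    then show ?thesis using L[of 0 s] by (simp add: oint_def cbox_interval)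
  next
    case False
    then show ?thesis using DERIV_minus[OF L[of s 0]] by (simp add: oint_def cbox_interval)
  qed
qed


theorem lemma5p1:
  fixes T :: real and lam lam_t :: "real \<Rightarrow> real \<Rightarrow> real"
  assumes T_pos: "T > 0"
    and lam_cont: "continuous_on ({0..T} \<times> UNIV) (\<lambda>(t, y). lam t y)"
    and lam_L1: "integrable lborel (\<lambda>y. SUP t\<in>{0..T}. \<bar>lam t y\<bar>)"
    and lam_t_deriv: "\<And>t y. t \<in> {0..T} \<Longrightarrow>
          ((\<lambda>s. lam s y) has_real_derivative lam_t t y) (at t within {0..T})"
    and lam_t_cont: "continuous_on ({0..T} \<times> UNIV) (\<lambda>(t, y). lam_t t y)"
    and lam_t_L1: "integrable lborel (\<lambda>y. SUP t\<in>{0..T}. \<bar>lam_t t y\<bar>)"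
  shows
    "(\<forall>t\<in>{0..T}. \<forall>y. phi lam t differentiable at y \<and> deriv (phi lam t) differentiable at y \<and>
        deriv (deriv (phi lam t)) y - 2 * lam t y * deriv (phi lam t) y = 0)
   \<and> (\<forall>t\<in>{0..T}. bij (phi lam t) \<and> C2 (phi lam t) \<and> C2 (inv (phi lam t)))
   \<and> (\<exists>L. \<forall>t\<in>{0..T}. \<forall>y ybar.
        \<bar>phi lam t y - phi lam t ybar\<bar> \<le> L * \<bar>y - ybar\<bar> \<and>
        \<bar>inv (phi lam t) y - inv (phi lam t) ybar\<bar> \<le> L * \<bar>y - ybar\<bar>)
   \<and> (\<forall>t\<in>{0..T}. \<forall>y. deriv (phi lam t) y > 0)
   \<and> (\<exists>B. \<forall>t\<in>{0..T}. \<forall>y. deriv (phi lam t) y \<le> B)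
   \<and> (\<exists>phi_t :: real \<Rightarrow> real \<Rightarrow> real.
        (\<forall>t\<in>{0..T}. \<forall>y. ((\<lambda>s. phi lam s y) has_real_derivative phi_t t y) (at t within {0..T}))
      \<and> (\<forall>y. continuous_on {0..T} (\<lambda>t. phi_t t y))
      \<and> (\<exists>K. \<forall>t\<in>{0..T}. \<forall>y ybar. \<bar>phi_t t y - phi_t t ybar\<bar> \<le> K * \<bar>y - ybar\<bar>))"
proof -
  define M where "M = (\<lambda>y. SUP t\<in>{0..T}. \<bar>lam t y\<bar>)"
  define Mt where "Mt = (\<lambda>y. SUP t\<in>{0..T}. \<bar>lam_t t y\<bar>)"
  define C where "C = integral UNIV M"
  define Ct where "Ct = integral UNIV Mt"
  define Lam where "Lam t s = oint 0 s (lam t)" for t s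
  define Lt where "Lt t s = oint 0 s (lam_t t)" for t s
  define E where "E t s = exp (2 * Lam t s)" for t s
  define H where "H t s = E t s * (2 * Lt t s)" for t s
  define pt where "pt t y = oint 0 y (H t)" for t y
  have MiL: "integrable lborel M" using lam_L1 by (simp add: M_def)
  have MtL: "integrable lborel Mt" using lam_t_L1 by (simp add: Mt_def)
  have lc: "continuous_on UNIV (lam t)" if "t \<in> {0..T}" for t using slice1[OF lam_cont that] .
  have ltc: "continuous_on UNIV (lam_t t)" if "t \<in> {0..T}" for t using slice1[OF lam_t_cont that] .
  have le1: "\<bar>lam t y\<bar> \<le> M y" if "t \<in> {0..T}" for t y
    unfolding M_def using le_SUP_abs[OF lam_cont compact_Icc that] by simp
  have le2: "\<bar>lam_t t y\<bar> \<le> Mt y" if "t \<in> {0..T}" for t y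
    unfolding Mt_def using le_SUP_abs[OF lam_t_cont compact_Icc that] by simp
  have Lam_bd: "\<bar>Lam t s\<bar> \<le> C" if "t \<in> {0..T}" for t s
    unfolding Lam_def C_def by (rule oint_L1_bound[OF lc[OF that] MiL le1[OF that]])
  have Lt_bd: "\<bar>Lt t s\<bar> \<le> Ct" if "t \<in> {0..T}" for t s
    unfolding Lt_def Ct_def by (rule oint_L1_bound[OF ltc[OF that] MtL le2[OF that]])
  have Lam_cont: "continuous_on ({0..T} \<times> UNIV) (\<lambda>(t,s). Lam t s)"
    unfolding Lam_def by (rule oint_joint_cont[OF lam_cont])
  have Lt_cont: "continuous_on ({0..T} \<times> UNIV) (\<lambda>(t,s). Lt t s)"
    unfolding Lt_def by (rule oint_joint_cont[OF lam_t_cont])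
  have E_cont: "continuous_on ({0..T} \<times> UNIV) (\<lambda>(t,s). E t s)"
    using Lam_cont unfolding E_def case_prod_beta' by (intro continuous_intros)
  have H_cont: "continuous_on ({0..T} \<times> UNIV) (\<lambda>(t,s). H t s)"
    using Lt_cont E_cont unfolding H_def case_prod_beta' by (intro continuous_intros)
  have Ec: "continuous_on UNIV (E t)" if "t \<in> {0..T}" for t using slice1[OF E_cont that] .
  have Hc: "continuous_on UNIV (H t)" if "t \<in> {0..T}" for t using slice1[OF H_cont that] .
  have Eint: "E t integrable_on {a..b}" if "t \<in> {0..T}" for t a b
    using Ec[OF that] by (intro integrable_continuous_interval) (auto intro: continuous_on_subset)
  have Hint: "H t integrable_on {a..b}" if "t \<in> {0..T}" for t a b
    using Hc[OF that] by (intro integrable_continuous_interval) (auto intro: continuous_on_subset)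
  have Elow: "exp (- (2 * C)) \<le> E t s" if "t \<in> {0..T}" for t s
    using Lam_bd[OF that, of s] unfolding E_def by simp
  have Eup: "E t s \<le> exp (2 * C)" if "t \<in> {0..T}" for t s
    using Lam_bd[OF that, of s] unfolding E_def by simp
  have Epos: "E t s > 0" for t s unfolding E_def by simp
  have Hbd: "\<bar>H t s\<bar> \<le> exp (2 * C) * (2 * Ct)" if "t \<in> {0..T}" for t s
  proof -
    have "\<bar>H t s\<bar> = E t s * (2 * \<bar>Lt t s\<bar>)" unfolding H_def using Epos[of t s] by (simp add: abs_mult)
    also have "\<dots> \<le> exp (2 * C) * (2 * Ct)"
      using Eup[OF that, of s] Lt_bd[OF that, of s] Epos[of t s]
      by (intro mult_mono) auto
    finally show ?thesis .
  qed
  have phi_eq: "phi lam t y = oint 0 y (E t)" for t y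
  proof -
    have "E t = (\<lambda>s. exp (2 * oint 0 s (lam t)))" by (simp add: fun_eq_iff E_def Lam_def)
    then show ?thesis by (simp add: phi_def)
  qed
  have phi_eq': "phi lam t = (\<lambda>y. oint 0 y (E t))" for t by (simp add: phi_eq fun_eq_iff)
  have dLam: "(Lam t has_real_derivative lam t y) (at y)" if "t \<in> {0..T}" for t y
  proof -
    have "Lam t = (\<lambda>y. oint 0 y (lam t))" by (simp add: Lam_def fun_eq_iff)
    then show ?thesis using oint_deriv[OF lc[OF that]] by simp
  qed
  have dE: "(E t has_real_derivative E t y * (2 * lam t y)) (at y)" if "t \<in> {0..T}" for t y
  proof -
    have "((\<lambda>x. exp (2 * Lam t x)) has_real_derivative exp (2 * Lam t y) * (2 * lam t y)) (at y)"
      by (rule DERIV_chain2[OF DERIV_exp DERIV_cmult[OF dLam[OF that]]])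
    moreover have "E t = (\<lambda>x. exp (2 * Lam t x))" by (simp add: E_def fun_eq_iff)
    ultimately show ?thesis by (simp add: E_def)
  qed
  have dphi: "(phi lam t has_real_derivative E t y) (at y)" if "t \<in> {0..T}" for t y
    unfolding phi_eq' using oint_deriv[OF Ec[OF that]] .
  have phi_diff: "phi lam t b - phi lam t a = oint a b (E t)" if "t \<in> {0..T}" for t a b
    unfolding phi_eq using oint_add[OF Eint[OF that], of 0 a b] by simp
  have pt_diff: "pt t b - pt t a = oint a b (H t)" if "t \<in> {0..T}" for t a b
    unfolding pt_def using oint_add[OF Hint[OF that], of 0 a b] by simp
  have low: "exp (- (2 * C)) * (b - a) \<le> phi lam t b - phi lam t a" if "t \<in> {0..T}" "a \<le> b" for t a b
    unfolding phi_diff[OF that(1)] by (rule oint_lower[OF Ec[OF that(1)] Elow[OF that(1)] that(2)])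
  have lipphi: "\<bar>phi lam t y - phi lam t ybar\<bar> \<le> exp (2 * C) * \<bar>y - ybar\<bar>" if "t \<in> {0..T}" for t y ybar
  proof -
    have "\<bar>oint ybar y (E t)\<bar> \<le> exp (2 * C) * \<bar>y - ybar\<bar>"
      by (rule oint_bound[OF Ec[OF that]]) (use Eup[OF that] Epos in \<open>auto simp: less_imp_le\<close>)
    then show ?thesis using phi_diff[OF that, where a=ybar and b=y] by simp
  qed
  have f0: "phi lam t 0 = 0" for t by (simp add: phi_eq oint_def)
  have invp: "bij (phi lam t) \<and> C2 (inv (phi lam t)) \<and>
      (\<forall>z w. \<bar>inv (phi lam t) z - inv (phi lam t) w\<bar> \<le> exp (2 * C) * \<bar>z - w\<bar>)" if "t \<in> {0..T}" for t
  proof -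
    note ip = inv_part[OF dphi[OF that] dE[OF that] lc[OF that] exp_gt_zero Epos f0 low[OF that]]
    have "1 / exp (- (2 * C)) = exp (2 * C)" by (simp add: exp_minus divide_inverse)
    then show ?thesis using ip by auto
  qed
  have DE: "deriv (phi lam t) = E t" "deriv (E t) = (\<lambda>y. E t y * (2 * lam t y))"
    "C2 (phi lam t)" if "t \<in> {0..T}" for t
  proof -
    have cD: "continuous_on UNIV (\<lambda>y. E t y * (2 * lam t y))"
      using Ec[OF that] lc[OF that] by (intro continuous_intros)
    note c = C2_of[OF dphi[OF that] dE[OF that] cD]
    show "deriv (phi lam t) = E t" "deriv (E t) = (\<lambda>y. E t y * (2 * lam t y))" "C2 (phi lam t)"
      using c by auto
  qed
  have dLt: "((\<lambda>t. Lam t s) has_real_derivative Lt t s) (at t within {0..T})" if "t \<in> {0..T}" for t s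
    unfolding Lam_def Lt_def
    by (rule oint_leibniz[OF lam_t_deriv lam_cont lam_t_cont that convex_real_interval(5)])
  have dEt: "((\<lambda>t. E t s) has_real_derivative H t s) (at t within {0..T})" if "t \<in> {0..T}" for t s
  proof -
    have "((\<lambda>t. exp (2 * Lam t s)) has_real_derivative exp (2 * Lam t s) * (2 * Lt t s)) (at t within {0..T})"
      by (rule DERIV_chain2[OF DERIV_exp DERIV_cmult[OF dLt[OF that]]])
    then show ?thesis by (simp add: E_def H_def)
  qed
  have dpt: "((\<lambda>s. phi lam s y) has_real_derivative pt t y) (at t within {0..T})" if "t \<in> {0..T}" for t y
    unfolding phi_eq pt_def
    by (rule oint_leibniz[OF dEt E_cont H_cont that convex_real_interval(5)])
  have ptc: "continuous_on {0..T} (\<lambda>t. pt t y)" for y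
    using slice2[OF oint_joint_cont[OF H_cont]] unfolding pt_def by simp
  have lippt: "\<bar>pt t y - pt t ybar\<bar> \<le> (exp (2 * C) * (2 * Ct)) * \<bar>y - ybar\<bar>" if "t \<in> {0..T}" for t y ybar
  proof -
    have "\<bar>oint ybar y (H t)\<bar> \<le> (exp (2 * C) * (2 * Ct)) * \<bar>y - ybar\<bar>"
      by (rule oint_bound[OF Hc[OF that] Hbd[OF that]])
    then show ?thesis using pt_diff[OF that, where a=ybar and b=y] by simp
  qed
  show ?thesis
  proof (intro conjI)
    show "\<forall>t\<in>{0..T}. \<forall>y. phi lam t differentiable at y \<and> deriv (phi lam t) differentiable at y \<and>
        deriv (deriv (phi lam t)) y - 2 * lam t y * deriv (phi lam t) y = 0"
      using dphi dE DE(1,2) real_differentiable_def by fastforce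
    show "\<forall>t\<in>{0..T}. bij (phi lam t) \<and> C2 (phi lam t) \<and> C2 (inv (phi lam t))"
      using invp DE(3) by blast
    show "\<exists>L. \<forall>t\<in>{0..T}. \<forall>y ybar.
        \<bar>phi lam t y - phi lam t ybar\<bar> \<le> L * \<bar>y - ybar\<bar> \<and>
        \<bar>inv (phi lam t) y - inv (phi lam t) ybar\<bar> \<le> L * \<bar>y - ybar\<bar>"
      using lipphi invp by blast
    show "\<forall>t\<in>{0..T}. \<forall>y. deriv (phi lam t) y > 0" using DE(1) Epos by simp
    show "\<exists>B. \<forall>t\<in>{0..T}. \<forall>y. deriv (phi lam t) y \<le> B" 
    proof (intro exI ballI allI)
      fix t y assume "t \<in> {0..T}"
      then show "deriv (phi lam t) y \<le> exp (2 * C)" using DE(1) Eup by simp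
    qed
    show "\<exists>phi_t :: real \<Rightarrow> real \<Rightarrow> real.
        (\<forall>t\<in>{0..T}. \<forall>y. ((\<lambda>s. phi lam s y) has_real_derivative phi_t t y) (at t within {0..T}))
      \<and> (\<forall>y. continuous_on {0..T} (\<lambda>t. phi_t t y))
      \<and> (\<exists>K. \<forall>t\<in>{0..T}. \<forall>y ybar. \<bar>phi_t t y - phi_t t ybar\<bar> \<le> K * \<bar>y - ybar\<bar>)"
      using dpt ptc lippt by blast
  qed
qed

end
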